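(* Let $n\ge 1$, $d>0$, $\hbar>0$, and let $f:\mathbb{R}_{\ge0}^n\to[0,\infty)$ be a toric profile function as described in the context, homogeneous of degree $d$, with level set $N=f^{-1}(1)$. (a) If $N$ is strictly convex, then for every $m\in\mathbb{N}_0^n$ $$ f(\hbar m)=\Bigl(\sup_{(k,a)\in\mathcal{A}}\frac{\hbar\langle m,k\rangle}{a}\Bigr)^d .$$ (b) If $N$ is strictly concave, then for every $m\in\mathbb{N}_0^n$ $$ f(\hbar m)=\Bigl(\inf_{(k,a)\in\mathcal{A}}\frac{\hbar\langle m,k\rangle}{a}\Bigr)^d .$$ Consequently the EBK spectrum $\sigma_{\mathrm{EBK}}=\{f(\hbar m)\mid m\in\mathbb{N}_0^n\}$ consists exactly of these values.
   Context: Setting: $f:\mathbb{R}_{\ge0}^n\to[0,\infty)$ is continuous, smooth and positive on $\mathbb{R}_{\ge0}^n\setminus\{0\}$ (smooth up to the boundary faces of the orthant), and homogeneous of degree $d$, i.e. $f(tp)=t^df(p)$ for all $t>0$. The level set $N:=f^{-1}(1)$ is regular ($\nabla f\neq0$ on $N$). Its outward unit normal is $n(p)=\nabla f(p)/|\nabla f(p)|$, and it is assumed that $n(p)\in[0,\infty)^n$ for all $p\in N$. The toric Hamiltonian is $H:\mathbb{C}^n\to\mathbb{R}$, $H(z)=f(\tfrac12|z_1|^2,\dots,\tfrac12|z_n|^2)$, and its EBK spectrum (without Maslov correction) is $\sigma_{\mathrm{EBK}}=\{f(\hbar m)\mid m\in\mathbb{N}_0^n\}$. $N$ is called strictly convex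 if the set $\{p\in\mathbb{R}_{\ge0}^n: f(p)\le1\}$ is convex and $N$ has everywhere positive normal curvatures with respect to $n$; strictly concave if $\{p\in\mathbb{R}_{\ge0}^n: f(p)\ge 1\}$ is convex and $N$ has everywhere negative normal curvatures with respect to $n$. The marked action spectrum of $H^{-1}(1)$ is $$\mathcal{A}:=\{(k,\langle p,k\rangle)\mid k\in\mathbb{Z}^n\setminus\{0\},\ p\in N,\ n(p)=\lambda k\text{ for some }\lambda>0\}\subset\mathbb{Z}^n\times(0,\infty).$$ *)

theory Defs
  imports "HOL-Analysis.Analysis"
begin

definition orthant :: "(real ^ 'n) set" where
  "orthant = {p. \<forall>i. 0 \<le> p $ i}"

definition is_partial_on :: "(real ^ 'n) set \<Rightarrow> (real ^ 'n \<Rightarrow> real) \<Rightarrow> 'n \<Rightarrow> (real ^ 'n \<Rightarrow> real) \<Rightarrow> bool" where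
  "is_partial_on U g i g' \<longleftrightarrow>
     (\<forall>x\<in>U. ((\<lambda>t. g (x + t *\<^sub>R axis i 1)) has_real_derivative g' x) (at 0))"

text \<open>C-infinity on an open set: all partial derivatives of all orders exist and are continuous.\<close>
definition smooth_on :: "(real ^ 'n) set \<Rightarrow> (real ^ 'n \<Rightarrow> real) \<Rightarrow> bool" where
  "smooth_on U F \<longleftrightarrow> open U \<and>
     (\<exists>S. F \<in> S \<and> (\<forall>g\<in>S. continuous_on U g \<and> (\<forall>i. \<exists>g'\<in>S. is_partial_on U g i g')))"

text \<open>Gradient of f at p, taken within the orthant (one-sided at boundary faces).\<close>
definition grad :: "(real ^ 'n \<Rightarrow> real) \<Rightarrow> real ^ 'n \<Rightarrow> real ^ 'n" where
  "grad f p = (SOME g. (f has_derivative (\<lambda>h. g \<bullet> h)) (at p within orthant))"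

definition level_set :: "(real ^ 'n \<Rightarrow> real) \<Rightarrow> (real ^ 'n) set" where
  "level_set f = {p \<in> orthant. f p = 1}"

definition unit_normal :: "(real ^ 'n \<Rightarrow> real) \<Rightarrow> real ^ 'n \<Rightarrow> real ^ 'n" where
  "unit_normal f p = (1 / norm (grad f p)) *\<^sub>R grad f p"

text \<open>Normal curvature of N at p in tangent direction v with respect to n:
  <dn_p(v), v> / |v|^2 (Weingarten map), the sign convention for which
  a strictly convex sublevel set gives positive curvature.\<close>
definition normal_curvature :: "(real ^ 'n \<Rightarrow> real) \<Rightarrow> real ^ 'n \<Rightarrow> real ^ 'n \<Rightarrow> real" where
  "normal_curvature f p v =
     ((SOME L. (unit_normal f has_derivative L) (at p within orthant)) v \<bullet> v) / (norm v)\<^sup>2"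

definition tangent_dirs :: "(real ^ 'n \<Rightarrow> real) \<Rightarrow> real ^ 'n \<Rightarrow> (real ^ 'n) set" where
  "tangent_dirs f p = {v. v \<noteq> 0 \<and> grad f p \<bullet> v = 0}"

definition strictly_convex_level :: "(real ^ 'n \<Rightarrow> real) \<Rightarrow> bool" where
  "strictly_convex_level f \<longleftrightarrow> convex {p \<in> orthant. f p \<le> 1} \<and>
     (\<forall>p\<in>level_set f. \<forall>v\<in>tangent_dirs f p. normal_curvature f p v > 0)"

definition strictly_concave_level :: "(real ^ 'n \<Rightarrow> real) \<Rightarrow> bool" where
  "strictly_concave_level f \<longleftrightarrow> convex {p \<in> orthant. f p \<ge> 1} \<and>
     (\<forall>p\<in>level_set f. \<forall>v\<in>tangent_dirs f p. normal_curvature f p v < 0)"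

definition int_vec :: "int ^ 'n \<Rightarrow> real ^ 'n" where
  "int_vec k = (\<chi> i. real_of_int (k $ i))"

definition nat_vec :: "nat ^ 'n \<Rightarrow> real ^ 'n" where
  "nat_vec m = (\<chi> i. real (m $ i))"

definition marked_action_spectrum :: "(real ^ 'n \<Rightarrow> real) \<Rightarrow> ((int ^ 'n) \<times> real) set" where
  "marked_action_spectrum f =
     {(k, p \<bullet> int_vec k) | k p. k \<noteq> 0 \<and> p \<in> level_set f \<and>
        (\<exists>c>0. unit_normal f p = c *\<^sub>R int_vec k)}"

text \<open>EBK spectrum (without Maslov correction).\<close>
definition sigma_EBK :: "(real ^ 'n \<Rightarrow> real) \<Rightarrow> real \<Rightarrow> real set" where
  "sigma_EBK f hbar = {f (hbar *\<^sub>R nat_vec m) | m. True}"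

definition toric_profile :: "(real ^ 'n \<Rightarrow> real) \<Rightarrow> real \<Rightarrow> bool" where
  "toric_profile f d \<longleftrightarrow>
     continuous_on orthant f \<and>
     (\<forall>p\<in>orthant. 0 \<le> f p) \<and>
     (\<forall>p\<in>orthant - {0}. 0 < f p) \<and>
     (\<exists>U F. open U \<and> orthant - {0} \<subseteq> U \<and> smooth_on U F \<and> (\<forall>p\<in>orthant - {0}. F p = f p)) \<and>
     (\<forall>p\<in>orthant. \<forall>t>0. f (t *\<^sub>R p) = t powr d * f p) \<and>
     (\<forall>p\<in>level_set f. grad f p \<noteq> 0) \<and>
     (\<forall>p\<in>level_set f. unit_normal f p \<in> orthant)"

end

theory Submission
  imports Defs
begin


lemma deriv_bound_between:
  fixes \<psi> \<psi>' :: "real \<Rightarrow> real"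
  assumes D: "\<And>t. min a b \<le> t \<Longrightarrow> t \<le> max a b \<Longrightarrow> (\<psi> has_real_derivative \<psi>' t) (at t)"
    and B: "\<And>t. min a b \<le> t \<Longrightarrow> t \<le> max a b \<Longrightarrow> \<bar>\<psi>' t\<bar> \<le> M"
  shows "\<bar>\<psi> b - \<psi> a\<bar> \<le> M * \<bar>b - a\<bar>"
proof (cases "a \<le> b")
  case True
  have "\<exists>x\<in>{a..b}. \<psi> b - \<psi> a = (\<lambda>s. \<psi>' x * s) (b - a)"
    apply (rule mvt_very_simple[OF True])
    using D True by (auto intro: has_derivative_at_withinI simp: has_field_derivative_def)
  then obtain x where "x \<in> {a..b}" "\<psi> b - \<psi> a = \<psi>' x * (b - a)" by auto
  moreover have "\<bar>\<psi>' x\<bar> \<le> M" using B \<open>x \<in> {a..b}\<close> True by auto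
  ultimately show ?thesis using True by (simp add: abs_mult mult_right_mono)
next
  case False
  hence F: "b \<le> a" by simp
  have "\<exists>x\<in>{b..a}. \<psi> a - \<psi> b = (\<lambda>s. \<psi>' x * s) (a - b)"
    apply (rule mvt_very_simple[OF F])
    using D F by (auto intro: has_derivative_at_withinI simp: has_field_derivative_def)
  then obtain x where "x \<in> {b..a}" "\<psi> a - \<psi> b = \<psi>' x * (a - b)" by auto
  moreover have "\<bar>\<psi>' x\<bar> \<le> M" using B \<open>x \<in> {b..a}\<close> F by auto
  ultimately show ?thesis using F by (simp add: abs_mult mult_right_mono abs_minus_commute)
qed

lemma norm_partial_vec:
  fixes h :: "real^'n"
  assumes "\<And>i. \<bar>v$i\<bar> \<le> \<bar>h$i\<bar>"
  shows "norm v \<le> norm h"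
  by (rule norm_le_componentwise_cart) (use assms in auto)

lemma cont_partials_deriv:
  fixes g :: "real^'n \<Rightarrow> real" and D :: "'n \<Rightarrow> real^'n \<Rightarrow> real"
  assumes U: "open U" and x: "x \<in> U"
    and P: "\<And>i. is_partial_on U g i (D i)" and C: "\<And>i. continuous_on U (D i)"
  shows "(g has_derivative (\<lambda>h. (\<chi> i. D i x) \<bullet> h)) (at x)"
  unfolding has_derivative_at_alt
proof (intro conjI allI impI)
  show "bounded_linear (\<lambda>h. (\<chi> i. D i x) \<bullet> h)" by (rule bounded_linear_inner_right)
  fix e :: real assume e: "e > 0"
  define e' where "e' = e / real CARD('n)"
  have e': "e' > 0" using e by (simp add: e'_def)
  have ev: "\<forall>\<^sub>F y in nhds x. (\<forall>i. dist (D i y) (D i x) < e') \<and> y \<in> U"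
  proof (intro eventually_conj eventually_all_finite allI)
    fix i
    have "isCont (D i) x" using C U x continuous_on_eq_continuous_at by blast
    then obtain \<delta> where "\<delta> > 0" "\<forall>y. dist y x < \<delta> \<longrightarrow> dist (D i y) (D i x) < e'"
      using e' unfolding continuous_at_eps_delta by blast
    then show "\<forall>\<^sub>F y in nhds x. dist (D i y) (D i x) < e'"
      unfolding eventually_nhds_metric by (metis dist_commute)
  next
    show "\<forall>\<^sub>F y in nhds x. y \<in> U" using U x eventually_nhds by blast
  qed
  then obtain d where d: "d > 0" and dB: "\<And>y. dist y x < d \<Longrightarrow> (\<forall>i. dist (D i y) (D i x) < e') \<and> y \<in> U"
    unfolding eventually_nhds_metric by (metis dist_commute)
  show "\<exists>d>0. \<forall>y. norm (y - x) < d \<longrightarrow> norm (g y - g x - (\<chi> i. D i x) \<bullet> (y - x)) \<le> e * norm (y - x)"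
  proof (intro exI[of _ d] conjI allI impI d)
    fix y assume y: "norm (y - x) < d"
    define h where "h = y - x"
    define P where "P I = (\<chi> i. if i \<in> I then h$i else 0)" for I
    have inball: "x + v \<in> U \<and> (\<forall>i. dist (D i (x + v)) (D i x) < e')" if "\<And>i. \<bar>v$i\<bar> \<le> \<bar>h$i\<bar>" for v
    proof -
      have "norm v \<le> norm h" by (rule norm_partial_vec) (use that in auto)
      hence "dist (x + v) x < d" using y by (simp add: h_def dist_norm)
      thus ?thesis using dB by blast
    qed
    have main: "\<bar>g (x + P I) - g x - (\<Sum>i\<in>I. D i x * h$i)\<bar> \<le> real (card I) * e' * norm h" if "finite I" for I
      using that
    proof (induction I rule: finite_induct)
      case empty
      have "P {} = 0" by (simp add: P_def vec_eq_iff)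
      then show ?case by simp
    next
      case (insert j I)
      define z where "z = x + P I"
      define \<phi> where "\<phi> t = g (z + t *\<^sub>R axis j 1) - D j x * t" for t
      have Pins: "x + P (insert j I) = z + h$j *\<^sub>R axis j 1"
        using insert.hyps by (auto simp: z_def P_def vec_eq_iff axis_def)
      have comp: "\<bar>(P I + t *\<^sub>R axis j 1)$i\<bar> \<le> \<bar>h$i\<bar>" if "min 0 (h$j) \<le> t" "t \<le> max 0 (h$j)" for t i
        using that insert.hyps by (auto simp: P_def axis_def)
      have der: "(\<phi> has_real_derivative (D j (z + t *\<^sub>R axis j 1) - D j x)) (at t)"
        if "min 0 (h$j) \<le> t" "t \<le> max 0 (h$j)" for t
      proof -
        define w where "w = z + t *\<^sub>R axis j 1"
        have wU: "w \<in> U" using inball[OF comp[OF that]] by (simp add: w_def z_def add.assoc)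
        have "((\<lambda>s. g (w + s *\<^sub>R axis j 1)) has_real_derivative D j w) (at 0)"
          using P[of j] wU unfolding is_partial_on_def by blast
        hence "((\<lambda>s. g (w + (s - t) *\<^sub>R axis j 1)) has_real_derivative D j w) (at (0 + t))"
          using DERIV_shift[of "\<lambda>s. g (w + (s - t) *\<^sub>R axis j 1)" "D j w" 0 t] by simp
        moreover have "(\<lambda>s. g (w + (s - t) *\<^sub>R axis j 1)) = (\<lambda>s. g (z + s *\<^sub>R axis j 1))"
          by (auto simp: w_def algebra_simps)
        ultimately have "((\<lambda>s. g (z + s *\<^sub>R axis j 1)) has_real_derivative D j w) (at t)" by simp
        hence "(\<phi> has_real_derivative (D j w - D j x)) (at t)"
          using DERIV_diff[OF _ DERIV_cmult_Id[of "D j x" t]] unfolding \<phi>_def by simp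
        thus ?thesis by (simp add: w_def)
      qed
      have "\<bar>\<phi> (h$j) - \<phi> 0\<bar> \<le> e' * \<bar>h$j - 0\<bar>"
      proof (rule deriv_bound_between[OF der])
        fix t assume "min 0 (h$j) \<le> t" "t \<le> max 0 (h$j)"
        from inball[OF comp[OF this]] show "\<bar>D j (z + t *\<^sub>R axis j 1) - D j x\<bar> \<le> e'"
          by (simp add: z_def add.assoc dist_real_def) (meson less_imp_le)
      qed
      moreover have "\<bar>h$j\<bar> \<le> norm h" by (rule component_le_norm_cart)
      moreover have "\<phi> (h$j) - \<phi> 0 = g (z + h$j *\<^sub>R axis j 1) - g z - D j x * h$j"
        by (simp add: \<phi>_def)
      ultimately have step: "\<bar>g (x + P (insert j I)) - g z - D j x * h$j\<bar> \<le> e' * norm h"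
        unfolding Pins using e' mult_left_mono[of "\<bar>h$j\<bar>" "norm h" e'] by (simp (no_asm_use)) linarith
      have "\<bar>g (x + P (insert j I)) - g x - (\<Sum>i\<in>insert j I. D i x * h$i)\<bar>
          \<le> \<bar>g (x + P (insert j I)) - g z - D j x * h$j\<bar> + \<bar>g z - g x - (\<Sum>i\<in>I. D i x * h$i)\<bar>"
        using insert.hyps by (simp add: z_def)
      also have "\<dots> \<le> e' * norm h + real (card I) * e' * norm h"
        using step insert.IH by (simp add: z_def)
      finally show ?case using insert.hyps by (simp add: algebra_simps)
    qed
    have "P UNIV = h" by (simp add: P_def vec_eq_iff)
    hence "\<bar>g y - g x - (\<Sum>i\<in>UNIV. D i x * h$i)\<bar> \<le> real CARD('n) * e' * norm h"
      using main[of UNIV] by (simp add: h_def)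
    moreover have "real CARD('n) * e' = e" by (simp add: e'_def)
    ultimately show "norm (g y - g x - (\<chi> i. D i x) \<bullet> (y - x)) \<le> e * norm (y - x)"
      by (simp add: inner_vec_def h_def)
  qed
qed




definition I0 :: "(real^'n) set" where "I0 = {p. \<forall>i. 0 < p$i}"

lemma open_I0: "open I0"
proof -
  have eq: "I0 = (\<Inter>i\<in>UNIV. {p::real^'n. p$i > 0})" by (auto simp: I0_def)
  show ?thesis unfolding eq by (intro open_INT ballI open_halfspace_component_gt_cart) simp
qed

lemma I0_sub: "I0 \<subseteq> orthant" by (auto simp: I0_def orthant_def less_imp_le)

lemma I0_nz: "p \<in> I0 \<Longrightarrow> p \<noteq> 0" by (auto simp: I0_def)

lemma at_I0: "p \<in> I0 \<Longrightarrow> at p within orthant = at p"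
  using open_I0 I0_sub by (metis at_within_interior interior_maximal subsetD)

lemma convex_orthant: "convex orthant"
  unfolding convex_def orthant_def by auto

lemma closed_orthant: "closed (orthant :: (real^'n) set)"
proof -
  have eq: "orthant = (\<Inter>i\<in>UNIV. {p::real^'n. p$i \<ge> 0})" by (auto simp: orthant_def)
  show ?thesis unfolding eq by (intro closed_INT ballI closed_halfspace_component_ge_cart)
qed

lemma orthant_scale: "p \<in> orthant \<Longrightarrow> 0 \<le> t \<Longrightarrow> t *\<^sub>R p \<in> orthant"
  by (auto simp: orthant_def)

lemma orthant_add: "p \<in> orthant \<Longrightarrow> q \<in> orthant \<Longrightarrow> p + q \<in> orthant"
  by (auto simp: orthant_def)

lemma I0_add: "p \<in> I0 \<Longrightarrow> q \<in> orthant \<Longrightarrow> p + q \<in> I0"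
  by (auto simp: orthant_def I0_def add_pos_nonneg)

lemma one_I0: "(1::real^'n) \<in> I0" by (auto simp: I0_def)

locale toric =
  fixes f :: "real^'n \<Rightarrow> real" and d :: real
  assumes dpos: "0 < d" and tp: "toric_profile f d"
begin

lemma f_cont: "continuous_on orthant f" using tp by (simp add: toric_profile_def)
lemma f_nonneg: "p \<in> orthant \<Longrightarrow> 0 \<le> f p" using tp by (simp add: toric_profile_def)
lemma f_pos: "p \<in> orthant \<Longrightarrow> p \<noteq> 0 \<Longrightarrow> 0 < f p" using tp by (simp add: toric_profile_def)
lemma f_hom: "p \<in> orthant \<Longrightarrow> 0 < t \<Longrightarrow> f (t *\<^sub>R p) = t powr d * f p"
  using tp by (simp add: toric_profile_def)
lemma grad_nz: "p \<in> level_set f \<Longrightarrow> grad f p \<noteq> 0" using tp by (simp add: toric_profile_def)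
lemma normal_orth: "p \<in> level_set f \<Longrightarrow> unit_normal f p \<in> orthant" using tp by (simp add: toric_profile_def)

lemma zero_orthant: "0 \<in> orthant" by (simp add: orthant_def)

lemma f0: "f 0 = 0"
proof -
  have "f 0 = 2 powr d * f 0" using f_hom[OF zero_orthant, of 2] by simp
  moreover have "2 powr d > (1::real)" using dpos gr_one_powr[of 2 d] by simp
  ultimately show ?thesis by (metis less_irrefl mult_cancel_right1)
qed

definition gg :: "real^'n \<Rightarrow> real" where "gg x = f x powr (1/d)"

lemma gg_nonneg: "0 \<le> gg x" by (simp add: gg_def)
lemma gg_pos: "x \<in> orthant \<Longrightarrow> x \<noteq> 0 \<Longrightarrow> 0 < gg x" using f_pos[of x] by (simp add: gg_def)
lemma gg_powr: "x \<in> orthant \<Longrightarrow> gg x powr d = f x"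
  using f_nonneg dpos by (simp add: gg_def powr_powr)
lemma gg_hom: "x \<in> orthant \<Longrightarrow> 0 < t \<Longrightarrow> gg (t *\<^sub>R x) = t * gg x"
  using f_nonneg dpos by (simp add: gg_def f_hom powr_mult powr_powr)
lemma gg_lt1: "x \<in> orthant \<Longrightarrow> (gg x < 1) = (f x < 1)"
proof -
  assume x: "x \<in> orthant"
  have a: "0 \<le> f x" using f_nonneg x .
  have "f x < 1 \<Longrightarrow> gg x < 1" unfolding gg_def using powr_less_mono2[of "1/d" "f x" 1] a dpos by simp
  moreover have "gg x < 1 \<Longrightarrow> f x < 1"
  proof (rule ccontr)
    assume "gg x < 1" "\<not> f x < 1"
    hence "1 powr (1/d) \<le> f x powr (1/d)" using powr_mono2[of "1/d" 1 "f x"] dpos by simp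
    thus False using \<open>gg x < 1\<close> by (simp add: gg_def)
  qed
  ultimately show ?thesis by blast
qed

lemma gg_gt1: "x \<in> orthant \<Longrightarrow> (gg x > 1) = (f x > 1)"
proof -
  assume x: "x \<in> orthant"
  have a: "0 \<le> f x" using f_nonneg x .
  have "f x > 1 \<Longrightarrow> gg x > 1" unfolding gg_def using powr_less_mono2[of "1/d" 1 "f x"] a dpos by simp
  moreover have "gg x > 1 \<Longrightarrow> f x > 1"
  proof (rule ccontr)
    assume "gg x > 1" "\<not> f x > 1"
    hence "f x powr (1/d) \<le> 1 powr (1/d)" using powr_mono2[of "1/d" "f x" 1] dpos a by simp
    thus False using \<open>gg x > 1\<close> by (simp add: gg_def)
  qed
  ultimately show ?thesis by blast
qed

lemma gg_cont: "continuous_on orthant gg"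
  unfolding gg_def using f_cont f_nonneg dpos
  by (intro continuous_on_powr') (auto intro: continuous_intros)

definition nrm :: "real^'n \<Rightarrow> real^'n" where "nrm x = (1 / gg x) *\<^sub>R x"

lemma nrm_N: "x \<in> orthant \<Longrightarrow> x \<noteq> 0 \<Longrightarrow> nrm x \<in> level_set f"
proof -
  assume x: "x \<in> orthant" "x \<noteq> 0"
  have g: "gg x > 0" using gg_pos x by auto
  have "f (nrm x) = (1 / gg x) powr d * f x" unfolding nrm_def using f_hom x g by simp
  also have "\<dots> = 1 / (gg x powr d) * f x" using g by (simp add: powr_divide)
  also have "\<dots> = 1" using gg_powr[OF x(1)] f_pos[OF x] by simp
  finally show ?thesis using x g by (auto simp: level_set_def nrm_def orthant_scale)
qed

lemma N_sub: "level_set f \<subseteq> orthant" by (auto simp: level_set_def)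
lemma N_nz: "p \<in> level_set f \<Longrightarrow> p \<noteq> 0" using f0 by (auto simp: level_set_def)

lemma vec_has_derivative:
  fixes DF :: "'n \<Rightarrow> real^'m \<Rightarrow> real"
  assumes "\<And>i. (DF i has_derivative L i) (at p)"
  shows "((\<lambda>x. \<chi> i. DF i x) has_derivative (\<lambda>h. \<chi> i. L i h)) (at p)"
proof -
  have "\<forall>b\<in>Basis. ((\<lambda>x. (\<chi> i. DF i x) \<bullet> b) has_derivative (\<lambda>h. (\<chi> i. L i h) \<bullet> b)) (at p)"
  proof
    fix b :: "real^'n" assume "b \<in> Basis"
    then obtain i where b: "b = axis i 1" unfolding Basis_vec_def by auto
    show "((\<lambda>x. (\<chi> i. DF i x) \<bullet> b) has_derivative (\<lambda>h. (\<chi> i. L i h) \<bullet> b)) (at p)"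
      unfolding b inner_axis using assms[of i] by simp
  qed
  thus ?thesis using has_derivative_componentwise_within[of _ _ p UNIV] by blast
qed

lemma smooth_G: "\<exists>G0. (\<forall>p\<in>orthant-{0}. (f has_derivative (\<lambda>h. G0 p \<bullet> h)) (at p within orthant))
   \<and> (\<forall>p\<in>I0. (f has_derivative (\<lambda>h. G0 p \<bullet> h)) (at p)) \<and> continuous_on I0 G0
   \<and> (\<forall>p\<in>I0. \<exists>L. (G0 has_derivative L) (at p))"
proof -
  obtain U F where U: "open U" and sub: "orthant - {0} \<subseteq> U" and sm: "smooth_on U F"
    and eq: "\<forall>p\<in>orthant - {0}. F p = f p"
    using tp unfolding toric_profile_def by blast
  obtain S where FS: "F \<in> S" and SS: "\<forall>g\<in>S. continuous_on U g \<and> (\<forall>i. \<exists>g'\<in>S. is_partial_on U g i g')"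
    using sm unfolding smooth_on_def by blast
  obtain DF where DF: "\<forall>i. DF i \<in> S \<and> is_partial_on U F i (DF i)"
    using SS FS by metis
  have "\<forall>q. \<exists>g'. g' \<in> S \<and> is_partial_on U (DF (fst q)) (snd q) g'" using SS DF by blast
  then obtain DD where DD: "\<forall>q. DD q \<in> S \<and> is_partial_on U (DF (fst q)) (snd q) (DD q)" by metis
  define DDF where "DDF i j = DD (i, j)" for i j
  have DDF: "\<forall>i j. DDF i j \<in> S \<and> is_partial_on U (DF i) j (DDF i j)"
    using DD unfolding DDF_def by (metis fst_conv snd_conv)
  define G0 where "G0 p = (\<chi> i. DF i p)" for p
  have dF: "(F has_derivative (\<lambda>h. G0 p \<bullet> h)) (at p)" if "p \<in> U" for p
    unfolding G0_def by (rule cont_partials_deriv[OF U that]) (use DF SS in auto)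
  have I0U: "I0 \<subseteq> U" using sub I0_sub I0_nz by blast
  have A: "(f has_derivative (\<lambda>h. G0 p \<bullet> h)) (at p within orthant)" if p: "p \<in> orthant - {0}" for p
  proof (rule has_derivative_transform_within[of F _ p orthant "norm p"])
    show "(F has_derivative (\<lambda>h. G0 p \<bullet> h)) (at p within orthant)"
      using dF[of p] p sub by (auto intro: has_derivative_at_withinI)
    show "0 < norm p" using p by auto
    show "p \<in> orthant" using p by auto
    fix x' assume "x' \<in> orthant" "dist x' p < norm p"
    hence "x' \<noteq> 0" by (auto simp: dist_norm)
    thus "F x' = f x'" using eq \<open>x' \<in> orthant\<close> by auto
  qed
  have B: "(f has_derivative (\<lambda>h. G0 p \<bullet> h)) (at p)" if p: "p \<in> I0" for p
    by (rule has_derivative_transform_within_open[OF dF open_I0 p])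
       (use p I0U eq I0_sub I0_nz in auto)
  have C: "continuous_on I0 G0"
    unfolding G0_def by (intro continuous_on_vec_lambda continuous_on_subset[OF _ I0U]) (use DF SS in auto)
  have D: "\<exists>L. (G0 has_derivative L) (at p)" if p: "p \<in> I0" for p
  proof -
    have "(DF i has_derivative (\<lambda>h. (\<chi> j. DDF i j p) \<bullet> h)) (at p)" for i
      by (rule cont_partials_deriv[OF U]) (use p I0U DDF SS in auto)
    hence "(G0 has_derivative (\<lambda>h. \<chi> i. (\<chi> j. DDF i j p) \<bullet> h)) (at p)"
      unfolding G0_def[abs_def] by (rule vec_has_derivative)
    thus ?thesis by blast
  qed
  show ?thesis using A B C D by blast
qed

definition G where "G = (SOME G0. (\<forall>p\<in>orthant-{0}. (f has_derivative (\<lambda>h. G0 p \<bullet> h)) (at p within orthant))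
   \<and> (\<forall>p\<in>I0. (f has_derivative (\<lambda>h. G0 p \<bullet> h)) (at p)) \<and> continuous_on I0 G0
   \<and> (\<forall>p\<in>I0. \<exists>L. (G0 has_derivative L) (at p)))"

lemma G_props: "(\<forall>p\<in>orthant-{0}. (f has_derivative (\<lambda>h. G p \<bullet> h)) (at p within orthant))
   \<and> (\<forall>p\<in>I0. (f has_derivative (\<lambda>h. G p \<bullet> h)) (at p)) \<and> continuous_on I0 G
   \<and> (\<forall>p\<in>I0. \<exists>L. (G has_derivative L) (at p))"
  unfolding G_def by (rule someI_ex[OF smooth_G])

lemma grad_deriv: "p \<in> orthant \<Longrightarrow> p \<noteq> 0 \<Longrightarrow> (f has_derivative (\<lambda>h. grad f p \<bullet> h)) (at p within orthant)"
  unfolding grad_def by (rule someI[of _ "G p"]) (use G_props in auto)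

lemma grad_I0: "p \<in> I0 \<Longrightarrow> grad f p = G p"
proof -
  assume p: "p \<in> I0"
  have "(f has_derivative (\<lambda>h. grad f p \<bullet> h)) (at p)"
    using grad_deriv[of p] p I0_sub I0_nz at_I0[OF p] by auto
  moreover have "(f has_derivative (\<lambda>h. G p \<bullet> h)) (at p)" using G_props p by auto
  ultimately have "(\<lambda>h. grad f p \<bullet> h) = (\<lambda>h. G p \<bullet> h)" by (rule has_derivative_unique)
  hence "grad f p \<bullet> (grad f p - G p) = G p \<bullet> (grad f p - G p)" by metis
  hence "(grad f p - G p) \<bullet> (grad f p - G p) = 0" by (simp add: inner_diff_left)
  thus ?thesis by simp
qed

lemma G_cont: "continuous_on I0 G" using G_props by auto
lemma G_diff: "p \<in> I0 \<Longrightarrow> \<exists>L. (G has_derivative L) (at p)" using G_props by auto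
lemma f_deriv_I0: "p \<in> I0 \<Longrightarrow> (f has_derivative (\<lambda>h. grad f p \<bullet> h)) (at p)"
  using G_props grad_I0 by auto

end



lemma deriv_sign:
  fixes \<psi> :: "real \<Rightarrow> real"
  assumes D: "(\<psi> has_derivative (\<lambda>t. t * c)) (at 0 within {0..1})"
    and le: "\<And>t. t \<in> {0..1} \<Longrightarrow> \<sigma> * \<psi> t \<le> \<sigma> * \<psi> 0"
    and s: "\<sigma> = 1 \<or> \<sigma> = -1"
  shows "\<sigma> * c \<le> 0"
proof (rule ccontr)
  assume "\<not> \<sigma> * c \<le> 0"
  hence pos: "\<sigma> * c > 0" by simp
  define e where "e = \<sigma> * c / 2"
  have e: "e > 0" using pos by (simp add: e_def)
  obtain \<delta> where \<delta>: "\<delta> > 0" and H: "\<And>y. y \<in> {0..1} \<Longrightarrow> norm (y - 0) < \<delta> \<Longrightarrow>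
      norm (\<psi> y - \<psi> 0 - (y - 0) * c) \<le> e * norm (y - 0)"
    using D e unfolding has_derivative_within_alt by blast
  define t where "t = min (\<delta>/2) 1"
  have t: "t > 0" "t \<in> {0..1}" "norm (t - 0) < \<delta>" using \<delta> by (auto simp: t_def)
  have "\<bar>\<psi> t - \<psi> 0 - t * c\<bar> \<le> e * t" using H[OF t(2) t(3)] t by simp
  moreover have "\<sigma> * \<psi> t \<le> \<sigma> * \<psi> 0" using le t by auto
  ultimately have "\<sigma> * (t * c) \<le> e * t" using s by (auto simp: algebra_simps abs_le_iff)
  hence "t * (\<sigma> * c) \<le> t * e" by (simp add: algebra_simps)
  hence "\<sigma> * c \<le> e" using t(1) by simp
  thus False using pos by (simp add: e_def)
qed

context toric begin

lemma euler: "p \<in> orthant \<Longrightarrow> p \<noteq> 0 \<Longrightarrow> grad f p \<bullet> p = d * f p"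
proof -
  assume p: "p \<in> orthant" "p \<noteq> 0"
  define S where "S = {-1/2<..<(1/2::real)}"
  define \<gamma> where "\<gamma> s = (1 + s) *\<^sub>R p" for s
  have \<gamma>S: "\<gamma> ` S \<subseteq> orthant" using p by (auto simp: S_def \<gamma>_def intro!: orthant_scale)
  have d\<gamma>: "(\<gamma> has_derivative (\<lambda>s. s *\<^sub>R p)) (at 0 within S)"
    unfolding \<gamma>_def by (auto intro!: derivative_eq_intros simp: algebra_simps)
  have "(f has_derivative (\<lambda>h. grad f p \<bullet> h)) (at (\<gamma> 0) within \<gamma> ` S)"
    using has_derivative_subset[OF grad_deriv[OF p] \<gamma>S] by (simp add: \<gamma>_def)
  from diff_chain_within[OF d\<gamma> this]
  have "((f \<circ> \<gamma>) has_derivative (\<lambda>s. s * (grad f p \<bullet> p))) (at 0)"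
    using at_within_open[of 0 S] by (simp add: S_def o_def)
  moreover have "((f \<circ> \<gamma>) has_derivative (\<lambda>s. s * (d * f p))) (at 0)"
  proof -
    have "((\<lambda>s. (1 + s) powr d * f p) has_real_derivative (d * (1 + 0) powr (d - 1) * 1 * f p)) (at 0)"
      by (auto intro!: derivative_eq_intros)
    hence A: "((\<lambda>s. (1 + s) powr d * f p) has_derivative (*) (d * (1 + 0) powr (d - 1) * 1 * f p)) (at 0)"
      by (simp only: has_field_derivative_def)
    have "(*) (d * (1 + 0) powr (d - 1) * 1 * f p) = (\<lambda>s. s * (d * f p))" by (auto simp: fun_eq_iff)
    hence "((\<lambda>s. (1 + s) powr d * f p) has_derivative (\<lambda>s. s * (d * f p))) (at 0)" using A by simp
    thus ?thesis
    proof (rule has_derivative_transform_within_open[where s = S])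
      show "open S" "0 \<in> S" by (auto simp: S_def)
      fix s assume "s \<in> S"
      thus "(1 + s) powr d * f p = (f \<circ> \<gamma>) s" using f_hom[OF p(1), of "1+s"] by (simp add: S_def \<gamma>_def)
    qed
  qed
  ultimately have "(\<lambda>s. s * (grad f p \<bullet> p)) = (\<lambda>s. s * (d * f p))" by (rule has_derivative_unique)
  thus ?thesis by (metis mult_1)
qed

lemma support:
  assumes s: "\<sigma> = 1 \<or> \<sigma> = -1" and cv: "convex {q \<in> orthant. \<sigma> * f q \<le> \<sigma>}"
    and p: "p \<in> level_set f" and q: "q \<in> orthant" "\<sigma> * f q \<le> \<sigma>"
  shows "\<sigma> * (grad f p \<bullet> (q - p)) \<le> 0"
proof -
  define K where "K = {q \<in> orthant. \<sigma> * f q \<le> \<sigma>}"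
  have pK: "p \<in> K" "q \<in> K" using p q by (auto simp: K_def level_set_def)
  have pO: "p \<in> orthant" "p \<noteq> 0" using p N_sub N_nz by auto
  define \<gamma> where "\<gamma> t = p + t *\<^sub>R (q - p)" for t
  have \<gamma>K: "\<gamma> ` {0..1} \<subseteq> K"
  proof
    fix y assume "y \<in> \<gamma> ` {0..1}"
    then obtain t where t: "t \<in> {0..1}" "y = \<gamma> t" by auto
    have "(1 - t) *\<^sub>R p + t *\<^sub>R q \<in> K" using cv pK t unfolding K_def convex_def by auto
    moreover have "(1 - t) *\<^sub>R p + t *\<^sub>R q = y" using t by (simp add: \<gamma>_def algebra_simps)
    ultimately show "y \<in> K" by simp
  qed
  hence \<gamma>O: "\<gamma> ` {0..1} \<subseteq> orthant" by (auto simp: K_def)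
  have d\<gamma>: "(\<gamma> has_derivative (\<lambda>t. t *\<^sub>R (q - p))) (at 0 within {0..1})"
    unfolding \<gamma>_def by (auto intro!: derivative_eq_intros)
  have "(f has_derivative (\<lambda>h. grad f p \<bullet> h)) (at (\<gamma> 0) within \<gamma> ` {0..1})"
    using has_derivative_subset[OF grad_deriv[OF pO] \<gamma>O] by (simp add: \<gamma>_def)
  from diff_chain_within[OF d\<gamma> this]
  have D: "((f \<circ> \<gamma>) has_derivative (\<lambda>t. t * (grad f p \<bullet> (q - p)))) (at 0 within {0..1})"
    by (simp add: o_def)
  show ?thesis
  proof (rule deriv_sign[OF D _ s])
    fix t :: real assume "t \<in> {0..1}"
    hence "\<gamma> t \<in> K" using \<gamma>K by auto
    moreover have "f (\<gamma> 0) = 1" using p by (simp add: \<gamma>_def level_set_def)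
    ultimately show "\<sigma> * (f \<circ> \<gamma>) t \<le> \<sigma> * (f \<circ> \<gamma>) 0" by (simp add: K_def)
  qed
qed

abbreviation "A \<equiv> marked_action_spectrum f"

lemma A_props:
  assumes "(k, a) \<in> A"
  shows "\<exists>p c. p \<in> level_set f \<and> c > 0 \<and> grad f p = c *\<^sub>R int_vec k \<and> a = p \<bullet> int_vec k \<and> a > 0
     \<and> int_vec k \<in> orthant"
proof -
  obtain p c where p: "p \<in> level_set f" and c: "c > 0" and n: "unit_normal f p = c *\<^sub>R int_vec k"
    and a: "a = p \<bullet> int_vec k"
    using assms unfolding marked_action_spectrum_def by auto
  have gnz: "grad f p \<noteq> 0" using grad_nz[OF p] .
  have "grad f p = norm (grad f p) *\<^sub>R unit_normal f p" using gnz by (simp add: unit_normal_def)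
  hence g: "grad f p = (norm (grad f p) * c) *\<^sub>R int_vec k" using n by simp
  have c': "norm (grad f p) * c > 0" using gnz c by simp
  have "grad f p \<bullet> p = d" using euler[of p] p N_sub N_nz by (auto simp: level_set_def)
  moreover have "grad f p \<bullet> p = (norm (grad f p) * c) * (int_vec k \<bullet> p)"
    by (subst g) (simp only: inner_scaleR_left)
  ultimately have "(norm (grad f p) * c) * (p \<bullet> int_vec k) = d" by (simp add: inner_commute)
  hence apos: "a > 0" using c' dpos a by (metis zero_less_mult_pos)
  have "int_vec k \<in> orthant"
  proof -
    have "c *\<^sub>R int_vec k \<in> orthant" using n normal_orth[OF p] by simp
    thus ?thesis using c by (auto simp: orthant_def zero_le_mult_iff)
  qed
  thus ?thesis using p c' g a apos by blast
qed

lemma A_bound: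
  assumes s: "\<sigma> = 1 \<or> \<sigma> = -1" and cv: "convex {q \<in> orthant. \<sigma> * f q \<le> \<sigma>}"
    and ka: "(k, a) \<in> A" and x: "x \<in> orthant"
  shows "\<sigma> * (x \<bullet> int_vec k / a) \<le> \<sigma> * gg x"
proof (cases "x = 0")
  case True
  then show ?thesis by (simp add: gg_def f0)
next
  case False
  obtain p c where p: "p \<in> level_set f" and c: "c > 0" and g: "grad f p = c *\<^sub>R int_vec k"
    and a: "a = p \<bullet> int_vec k" and apos: "a > 0"
    using A_props[OF ka] by blast
  have gx: "gg x > 0" using gg_pos x False by auto
  have qN: "nrm x \<in> level_set f" using nrm_N x False by auto
  have "\<sigma> * (grad f p \<bullet> (nrm x - p)) \<le> 0"
    by (rule support[OF s cv p]) (use qN s in \<open>auto simp: level_set_def\<close>)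
  hence "\<sigma> * c * (nrm x \<bullet> int_vec k - a) \<le> 0" using g a by (simp add: inner_diff_right inner_commute algebra_simps)
  hence "\<sigma> * (nrm x \<bullet> int_vec k - a) \<le> 0" using c
    by (metis mult.commute mult.left_commute mult_le_0_iff not_less)
  hence "\<sigma> * ((x \<bullet> int_vec k) / gg x) \<le> \<sigma> * a" by (simp add: nrm_def algebra_simps)
  hence "\<sigma> * (x \<bullet> int_vec k) \<le> \<sigma> * a * gg x" using gx s by (auto simp: field_simps)
  thus ?thesis using apos s by (auto simp: field_simps)
qed

lemma A_nonneg: "(k, a) \<in> A \<Longrightarrow> x \<in> orthant \<Longrightarrow> 0 \<le> x \<bullet> int_vec k / a"
proof -
  assume ka: "(k, a) \<in> A" and x: "x \<in> orthant"
  obtain p c where "a > 0" "int_vec k \<in> orthant" using A_props[OF ka] by blast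
  moreover have "0 \<le> x \<bullet> int_vec k" using x \<open>int_vec k \<in> orthant\<close>
    by (auto simp: inner_vec_def orthant_def intro!: sum_nonneg)
  ultimately show ?thesis by simp
qed

end



context toric begin

lemma N_closed: "closed (level_set f)"
proof -
  have "level_set f = orthant \<inter> f -` {1}" by (auto simp: level_set_def)
  thus ?thesis using continuous_closed_preimage[OF f_cont closed_orthant closed_singleton] by simp
qed

lemma N_bounded: "\<exists>R>0. \<forall>p\<in>level_set f. norm p \<le> R"
proof -
  define S1 where "S1 = orthant \<inter> sphere (0::real^'n) 1"
  have cS: "compact S1" unfolding S1_def by (intro closed_Int_compact closed_orthant compact_sphere)
  have "axis undefined (1::real) \<in> orthant" by (auto simp: orthant_def axis_def)
  hence "axis undefined 1 \<in> S1" by (simp add: S1_def)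
  hence neS: "S1 \<noteq> {}" by blast
  obtain p1 where p1: "p1 \<in> S1" and mn: "\<And>y. y \<in> S1 \<Longrightarrow> f p1 \<le> f y"
    using continuous_attains_inf[OF cS neS continuous_on_subset[OF f_cont]] by (auto simp: S1_def)
  have "p1 \<noteq> 0" "p1 \<in> orthant" using p1 by (auto simp: S1_def)
  hence c: "f p1 > 0" using f_pos by blast
  define R where "R = (1 / f p1) powr (1/d)"
  have R: "R > 0" using c by (simp add: R_def)
  have "norm p \<le> R" if p: "p \<in> level_set f" for p
  proof -
    have pO: "p \<in> orthant" "p \<noteq> 0" using p N_sub N_nz by auto
    define u where "u = (1 / norm p) *\<^sub>R p"
    have uS: "u \<in> S1" using pO by (auto simp: S1_def u_def orthant_scale)
    have "p = norm p *\<^sub>R u" using pO by (simp add: u_def)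
    hence "f p = norm p powr d * f u" using f_hom[of u "norm p"] uS pO by (auto simp: S1_def)
    hence "1 = norm p powr d * f u" using p by (simp add: level_set_def)
    moreover have "norm p powr d * f p1 \<le> norm p powr d * f u" using mn[OF uS] by (simp add: mult_left_mono)
    ultimately have "1 \<ge> norm p powr d * f p1" by simp
    hence le: "norm p powr d \<le> 1 / f p1" using c by (simp add: field_simps)
    have "norm p = (norm p powr d) powr (1/d)" using dpos by (simp add: powr_powr)
    also have "\<dots> \<le> (1 / f p1) powr (1/d)" using le dpos by (intro powr_mono2) auto
    finally show ?thesis by (simp add: R_def)
  qed
  thus ?thesis using R by blast
qed

lemma N_compact: "compact (level_set f)"
  using N_closed N_bounded by (metis bounded_pos compact_eq_bounded_closed)

lemma N_ne: "level_set f \<noteq> {}"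
  using nrm_N[of 1] one_I0 I0_sub I0_nz by blast

lemma gg_N: "p \<in> level_set f \<Longrightarrow> gg p = 1" by (simp add: gg_def level_set_def)

lemma lagrange:
  assumes s: "\<sigma> = 1 \<or> \<sigma> = -1" and y: "y \<in> level_set f" "y \<in> I0"
    and opt: "\<And>q. q \<in> level_set f \<Longrightarrow> \<sigma> * (q \<bullet> u) \<le> \<sigma> * (y \<bullet> u)"
  shows "u = ((y \<bullet> u) / d) *\<^sub>R grad f y"
proof -
  define Gy where "Gy = grad f y"
  have dfy: "(f has_derivative (\<lambda>h. Gy \<bullet> h)) (at y)" using f_deriv_I0[OF y(2)] by (simp add: Gy_def)
  have fy: "f y = 1" using y by (simp add: level_set_def)
  have orth: "u \<bullet> v = 0" if v: "Gy \<bullet> v = 0" for v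
  proof -
    obtain r where r: "r > 0" "ball y r \<subseteq> I0" using open_I0 y(2) open_contains_ball by blast
    define \<delta> where "\<delta> = r / (norm v + 1)"
    have nv: "norm v + 1 > 0" by (simp add: add_nonneg_pos)
    hence \<delta>: "\<delta> > 0" using r by (simp add: \<delta>_def)
    have inI0: "y + s *\<^sub>R v \<in> I0" if "\<bar>0 - s\<bar> < \<delta>" for s
    proof -
      have "norm (s *\<^sub>R v) \<le> \<bar>s\<bar> * (norm v + 1)" by (simp add: mult_left_mono)
      also have "\<dots> < \<delta> * (norm v + 1)" using that nv by (intro mult_strict_right_mono) auto
      also have "\<dots> = r" using nv by (simp add: \<delta>_def)
      finally show ?thesis using r by (auto simp: dist_norm)
    qed
    define \<phi> where "\<phi> s = ((y + s *\<^sub>R v) \<bullet> u) / gg (y + s *\<^sub>R v)" for s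
    have dl: "((\<lambda>s. f (y + s *\<^sub>R v)) has_real_derivative 0) (at 0)"
    proof -
      have "((\<lambda>s. y + s *\<^sub>R v) has_derivative (\<lambda>s. s *\<^sub>R v)) (at 0)"
        by (auto intro!: derivative_eq_intros)
      from diff_chain_at[OF this, of f "\<lambda>h. Gy \<bullet> h"] dfy
      have "((\<lambda>s. f (y + s *\<^sub>R v)) has_derivative (\<lambda>s. s * (Gy \<bullet> v))) (at 0)" by (simp add: o_def)
      moreover have "(*) (0::real) = (\<lambda>s. 0)" by auto
      ultimately show ?thesis using v by (simp add: has_field_derivative_def)
    qed
    have dg: "((\<lambda>s. gg (y + s *\<^sub>R v)) has_real_derivative 0) (at 0)"
      unfolding gg_def using DERIV_fun_powr[OF dl, of "1/d"] fy by simp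
    have dn: "((\<lambda>s. (y + s *\<^sub>R v) \<bullet> u) has_real_derivative (v \<bullet> u)) (at 0)"
      by (auto intro!: derivative_eq_intros simp: inner_add_left)
    have d\<phi>: "(\<phi> has_real_derivative (v \<bullet> u)) (at 0)"
      using DERIV_divide[OF dn dg] fy gg_N[OF y(1)] unfolding \<phi>_def by simp
    have \<phi>val: "\<phi> s = nrm (y + s *\<^sub>R v) \<bullet> u" for s by (simp add: \<phi>_def nrm_def)
    have \<phi>0: "\<phi> 0 = y \<bullet> u" using gg_N[OF y(1)] by (simp add: \<phi>_def)
    have loc: "\<sigma> * \<phi> s \<le> \<sigma> * \<phi> 0" if "\<bar>0 - s\<bar> < \<delta>" for s
    proof -
      have "nrm (y + s *\<^sub>R v) \<in> level_set f" using inI0[OF that] I0_sub I0_nz by (intro nrm_N) auto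
      thus ?thesis using opt \<phi>val \<phi>0 by simp
    qed
    show ?thesis
    proof (cases "\<sigma> = 1")
      case True
      have "v \<bullet> u = 0" by (rule DERIV_local_max[OF d\<phi> \<delta>]) (use loc True in auto)
      thus ?thesis by (simp add: inner_commute)
    next
      case False
      hence "\<sigma> = -1" using s by auto
      have "v \<bullet> u = 0" by (rule DERIV_local_min[OF d\<phi> \<delta>]) (use loc \<open>\<sigma> = -1\<close> in auto)
      thus ?thesis by (simp add: inner_commute)
    qed
  qed
  have Gnz: "Gy \<noteq> 0" using grad_nz[OF y(1)] by (simp add: Gy_def)
  define c where "c = (u \<bullet> Gy) / (Gy \<bullet> Gy)"
  define w where "w = u - c *\<^sub>R Gy"
  have "Gy \<bullet> w = 0" using Gnz by (simp add: w_def c_def inner_diff_right inner_commute)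
  hence "u \<bullet> w = 0" by (rule orth)
  hence "w \<bullet> w = 0" using \<open>Gy \<bullet> w = 0\<close> by (simp add: w_def inner_diff_left inner_commute)
  hence uc: "u = c *\<^sub>R Gy" by (simp add: w_def)
  have "Gy \<bullet> y = d" using euler[of y] y N_sub N_nz fy by (auto simp: Gy_def)
  hence "y \<bullet> u = c * d" using uc by (simp add: inner_commute)
  hence "c = (y \<bullet> u) / d" using dpos by simp
  thus ?thesis using uc by (simp add: Gy_def)
qed

end



context toric begin

lemma unit_normal_norm: "p \<in> level_set f \<Longrightarrow> norm (unit_normal f p) = 1"
  using grad_nz[of p] by (simp add: unit_normal_def)

lemma normal_deriv_exists:
  assumes p0: "p0 \<in> level_set f" "p0 \<in> I0"
  shows "\<exists>L. (unit_normal f has_derivative L) (at p0 within orthant)"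
proof -
  obtain LG where LG: "(G has_derivative LG) (at p0)" using G_diff[OF p0(2)] by blast
  have Gnz: "G p0 \<noteq> 0" using grad_nz[OF p0(1)] grad_I0[OF p0(2)] by simp
  have nd: "(\<lambda>y. norm (G y)) differentiable (at p0)"
  proof -
    have "norm differentiable (at (G p0))" using has_derivative_norm[OF Gnz] unfolding differentiable_def by blast
    moreover have "G differentiable (at p0)" using LG unfolding differentiable_def by blast
    ultimately show ?thesis using differentiable_chain_at[of G p0 norm] by (simp add: o_def)
  qed
  have "(\<lambda>y. inverse (norm (G y)) *\<^sub>R G y) differentiable (at p0)"
  proof (intro differentiable_scaleR differentiable_inverse nd)
    show "norm (G p0) \<noteq> 0" using Gnz by simp
    show "G differentiable (at p0)" using LG unfolding differentiable_def by blast
  qed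
  then obtain L where L: "((\<lambda>y. inverse (norm (G y)) *\<^sub>R G y) has_derivative L) (at p0)"
    unfolding differentiable_def by blast
  have "(unit_normal f has_derivative L) (at p0)"
    by (rule has_derivative_transform_within_open[OF L open_I0 p0(2)])
       (simp add: unit_normal_def grad_I0 divide_inverse)
  thus ?thesis using at_I0[OF p0(2)] by auto
qed

lemma unique_opt:
  assumes s: "\<sigma> = 1 \<or> \<sigma> = -1" and cv: "convex {q \<in> orthant. \<sigma> * f q \<le> \<sigma>}"
    and curv: "\<forall>p\<in>level_set f. \<forall>v\<in>tangent_dirs f p. normal_curvature f p v \<noteq> 0"
    and p0: "p0 \<in> level_set f" "p0 \<in> I0" and q: "q \<in> level_set f"
    and eq: "q \<bullet> unit_normal f p0 = p0 \<bullet> unit_normal f p0"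
  shows "q = p0"
proof (rule ccontr)
  assume qp: "q \<noteq> p0"
  define u0 where "u0 = unit_normal f p0"
  define Gp where "Gp = grad f p0"
  have Gnz: "Gp \<noteq> 0" using grad_nz[OF p0(1)] by (simp add: Gp_def)
  have Gu: "Gp = norm Gp *\<^sub>R u0" using Gnz by (simp add: u0_def Gp_def unit_normal_def)
  have p0O: "p0 \<in> orthant" "p0 \<noteq> 0" using p0 N_sub N_nz by auto
  define h0 where "h0 = p0 \<bullet> u0"
  have "Gp \<bullet> p0 = d" using euler[OF p0O] p0(1) by (simp add: Gp_def level_set_def)
  hence "norm Gp * h0 = d" using Gu by (metis h0_def inner_commute inner_scaleR_left)
  hence h0: "h0 > 0" using dpos Gnz by (metis zero_less_norm_iff zero_less_mult_pos)
  have supN: "\<sigma> * (z \<bullet> u0) \<le> \<sigma> * h0" if z: "z \<in> orthant" "\<sigma> * f z \<le> \<sigma>" for z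
  proof -
    have "\<sigma> * (Gp \<bullet> (z - p0)) \<le> 0" using support[OF s cv p0(1) z] by (simp add: Gp_def)
    hence "\<sigma> * (norm Gp * (z \<bullet> u0 - h0)) \<le> 0"
      using Gu by (metis h0_def inner_commute inner_diff_left inner_scaleR_left)
    hence "norm Gp * (\<sigma> * (z \<bullet> u0 - h0)) \<le> 0" by (simp add: algebra_simps)
    hence "\<sigma> * (z \<bullet> u0 - h0) \<le> 0" using Gnz by (simp add: mult_le_0_iff)
    thus ?thesis by (simp add: algebra_simps)
  qed
  define v where "v = q - p0"
  have vnz: "v \<noteq> 0" using qp by (simp add: v_def)
  have vu: "v \<bullet> u0 = 0" using eq by (simp add: v_def u0_def inner_diff_left)
  define y where "y t = p0 + t *\<^sub>R v" for t
  have yK: "y t \<in> orthant \<and> \<sigma> * f (y t) \<le> \<sigma>" if t: "t \<in> {0..1}" for t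
  proof -
    have "(1 - t) *\<^sub>R p0 + t *\<^sub>R q \<in> {q \<in> orthant. \<sigma> * f q \<le> \<sigma>}"
      using cv p0 q t s unfolding convex_def by (auto simp: level_set_def)
    moreover have "(1 - t) *\<^sub>R p0 + t *\<^sub>R q = y t" by (simp add: y_def v_def algebra_simps)
    ultimately show ?thesis by simp
  qed
  have yu: "y t \<bullet> u0 = h0" for t by (simp add: y_def inner_add_left vu h0_def)
  have yN: "y t \<in> level_set f" if t: "t \<in> {0..1}" for t
  proof (rule ccontr)
    assume nN: "y t \<notin> level_set f"
    have yO: "y t \<in> orthant" "\<sigma> * f (y t) \<le> \<sigma>" using yK[OF t] by auto
    hence lt: "\<sigma> * f (y t) < \<sigma>" using nN s by (auto simp: level_set_def)
    have ynz: "y t \<noteq> 0" using yu[of t] h0 by auto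
    have gpos: "gg (y t) > 0" using gg_pos yO ynz by auto
    have zN: "nrm (y t) \<in> level_set f" using nrm_N yO ynz by auto
    have "\<sigma> * (nrm (y t) \<bullet> u0) \<le> \<sigma> * h0" using supN zN s by (auto simp: level_set_def)
    hence A: "\<sigma> * (h0 / gg (y t)) \<le> \<sigma> * h0" using yu[of t] by (simp add: nrm_def)
    show False
    proof (cases "\<sigma> = 1")
      case True
      hence "gg (y t) < 1" using lt gg_lt1[OF yO(1)] by simp
      hence "h0 / gg (y t) > h0" using gpos h0 by (simp add: less_divide_eq)
      thus False using A True by simp
    next
      case False
      hence sm: "\<sigma> = -1" using s by simp
      hence "gg (y t) > 1" using lt gg_gt1[OF yO(1)] by simp
      hence "h0 / gg (y t) < h0" using gpos h0 by (simp add: divide_less_eq)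
      thus False using A sm by simp
    qed
  qed
  obtain r where r: "r > 0" "ball p0 r \<subseteq> I0" using open_I0 p0(2) open_contains_ball by blast
  define \<tau> where "\<tau> = min 1 (r / (2 * norm v))"
  have \<tau>: "\<tau> > 0" "\<tau> \<le> 1" using r vnz by (auto simp: \<tau>_def)
  have yI0: "y t \<in> I0" if t: "t \<in> {0..\<tau>}" for t
  proof -
    have "norm (t *\<^sub>R v) = t * norm v" using t by simp
    also have "\<dots> \<le> (r / (2 * norm v)) * norm v" using t vnz by (intro mult_right_mono) (auto simp: \<tau>_def)
    also have "\<dots> < r" using vnz r by (simp add: field_simps)
    finally show ?thesis using r by (auto simp: y_def dist_norm)
  qed
  have un: "unit_normal f (y t) = u0" if t: "t \<in> {0..\<tau>}" for t
  proof -
    have tt: "t \<in> {0..1}" using t \<tau> by auto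
    have "u0 = ((y t \<bullet> u0) / d) *\<^sub>R grad f (y t)"
    proof (rule lagrange[OF s yN[OF tt] yI0[OF t]])
      fix q' assume "q' \<in> level_set f"
      thus "\<sigma> * (q' \<bullet> u0) \<le> \<sigma> * (y t \<bullet> u0)" using supN s yu by (auto simp: level_set_def)
    qed
    hence gy: "grad f (y t) = (d / h0) *\<^sub>R u0" using yu[of t] h0 dpos by (simp add: field_simps)
    have nu: "norm u0 = 1" using unit_normal_norm[OF p0(1)] by (simp add: u0_def)
    show ?thesis using gy h0 dpos nu by (simp add: unit_normal_def)
  qed
  define L where "L = (SOME L. (unit_normal f has_derivative L) (at p0 within orthant))"
  have L: "(unit_normal f has_derivative L) (at p0)"
    using someI_ex[OF normal_deriv_exists[OF p0]] at_I0[OF p0(2)] by (simp add: L_def)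
  have "((\<lambda>t. p0 + t *\<^sub>R v) has_derivative (\<lambda>t. t *\<^sub>R v)) (at 0)" by (auto intro!: derivative_eq_intros)
  from diff_chain_at[OF this, of "unit_normal f" L] L
  have "((\<lambda>t. unit_normal f (y t)) has_derivative (\<lambda>t. L (t *\<^sub>R v))) (at 0)" by (simp add: o_def y_def)
  moreover have "(\<lambda>t. L (t *\<^sub>R v)) = (\<lambda>t. t *\<^sub>R L v)"
    using has_derivative_bounded_linear[OF L] by (simp add: linear_simps(5) bounded_linear.linear fun_eq_iff linear_cmul)
  ultimately have D1: "((\<lambda>t. unit_normal f (y t)) has_vector_derivative L v) (at 0 within {0..\<tau>})"
    by (auto simp: has_vector_derivative_def intro: has_derivative_at_withinI)
  have D2: "((\<lambda>t. unit_normal f (y t)) has_vector_derivative 0) (at 0 within {0..\<tau>})"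
  proof (rule has_vector_derivative_transform_within[of "\<lambda>t. u0" _ _ _ 1])
    show "((\<lambda>t. u0) has_vector_derivative 0) (at 0 within {0..\<tau>})" by (rule has_vector_derivative_const)
  qed (use un \<tau> in auto)
  have Lv: "L v = 0"
  proof (rule vector_derivative_unique_within[OF _ D1 D2])
    show "at 0 within {0..\<tau>} \<noteq> bot" using \<tau> by (simp add: at_within_Icc_at_right)
  qed
  have uv: "u0 \<bullet> v = 0" using vu by (metis inner_commute)
  have "Gp \<bullet> v = 0" by (subst Gu) (simp add: uv)
  hence tan: "v \<in> tangent_dirs f p0"
    using vnz by (simp add: tangent_dirs_def Gp_def[symmetric])
  have "normal_curvature f p0 v = 0" using Lv by (simp add: normal_curvature_def L_def[symmetric])
  thus False using curv p0(1) tan by blast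
qed

end



lemma normdiff:
  fixes a b :: "'a::real_normed_vector"
  assumes a: "a \<noteq> 0" and b: "b \<noteq> 0"
  shows "norm ((1 / norm a) *\<^sub>R a - (1 / norm b) *\<^sub>R b) \<le> 2 * norm (a - b) / norm b"
proof -
  have coef: "1 / norm b + (norm b - norm a) / (norm a * norm b) = 1 / norm a"
    using a b by (simp add: field_simps)
  have "(1 / norm b) *\<^sub>R (a - b) + ((norm b - norm a) / (norm a * norm b)) *\<^sub>R a
      = (1 / norm b + (norm b - norm a) / (norm a * norm b)) *\<^sub>R a - (1 / norm b) *\<^sub>R b"
    by (simp add: scaleR_diff_right scaleR_add_left)
  hence eq: "(1 / norm a) *\<^sub>R a - (1 / norm b) *\<^sub>R b = (1 / norm b) *\<^sub>R (a - b) + ((norm b - norm a) / (norm a * norm b)) *\<^sub>R a"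
    using coef by simp
  have "norm (((norm b - norm a) / (norm a * norm b)) *\<^sub>R a) = \<bar>norm b - norm a\<bar> / norm b"
    using a b by (simp add: abs_mult)
  also have "\<dots> \<le> norm (a - b) / norm b"
    using b by (intro divide_right_mono) (auto simp: norm_triangle_ineq3 abs_minus_commute)
  moreover have "norm ((1 / norm b) *\<^sub>R (a - b)) = norm (a - b) / norm b" by simp
  moreover have "norm ((1 / norm b) *\<^sub>R (a - b) + ((norm b - norm a) / (norm a * norm b)) *\<^sub>R a)
     \<le> norm ((1 / norm b) *\<^sub>R (a - b)) + norm (((norm b - norm a) / (norm a * norm b)) *\<^sub>R a)"
    by (rule norm_triangle_ineq)
  ultimately have "norm ((1 / norm a) *\<^sub>R a - (1 / norm b) *\<^sub>R b) \<le> norm (a - b) / norm b + norm (a - b) / norm b"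
    unfolding eq by linarith
  thus ?thesis by simp
qed

lemma int_dir:
  fixes u :: "real^'n"
  assumes u: "norm u = 1" and \<delta>: "\<delta> > 0"
  shows "\<exists>k::int^'n. int_vec k \<noteq> 0 \<and> norm ((1 / norm (int_vec k)) *\<^sub>R int_vec k - u) < \<delta>"
proof -
  define C where "C = real CARD('n)"
  have C: "C > 0" by (simp add: C_def)
  obtain j :: nat where j: "real j > C / \<delta> + C" using reals_Archimedean2 by blast
  have Cd: "C / \<delta> > 0" using C \<delta> by simp
  have jpos: "real j > C" using j Cd by linarith
  define k where "k = (\<chi> i. round (real j * u$i))"
  define b where "b = real j *\<^sub>R u"
  have nb: "norm b = real j" using u by (simp add: b_def)
  have "norm (int_vec k - b) \<le> (\<Sum>i\<in>UNIV. \<bar>(int_vec k - b)$i\<bar>)" by (rule norm_le_l1_cart)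
  also have "\<dots> \<le> (\<Sum>i\<in>(UNIV::'n set). 1/2)"
  proof (intro sum_mono)
    fix i
    show "\<bar>(int_vec k - b)$i\<bar> \<le> 1/2"
      using of_int_round_abs_le[of "real j * u$i"] by (simp add: int_vec_def k_def b_def)
  qed
  also have "\<dots> = C / 2" by (simp add: C_def)
  finally have ab: "norm (int_vec k - b) \<le> C / 2" .
  have bnz: "b \<noteq> 0" using nb jpos C by auto
  have anz: "int_vec k \<noteq> 0"
  proof
    assume "int_vec k = 0"
    hence "norm b \<le> C / 2" using ab by simp
    thus False using nb jpos C by simp
  qed
  have "norm ((1 / norm (int_vec k)) *\<^sub>R int_vec k - (1 / norm b) *\<^sub>R b) \<le> 2 * norm (int_vec k - b) / norm b"
    by (rule normdiff[OF anz bnz])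
  also have "\<dots> \<le> C / real j" using ab jpos C nb by (simp add: divide_right_mono)
  also have "\<dots> < \<delta>"
  proof -
    have "C / \<delta> < real j" using j C by linarith
    hence "C < \<delta> * real j" using pos_divide_less_eq[OF \<delta>] by (simp add: mult.commute)
    thus ?thesis using jpos C by (simp add: divide_less_eq mult.commute)
  qed
  finally show ?thesis using anz u nb bnz by (auto simp: b_def)
qed

context toric begin

lemma normal_facts:
  assumes p: "p \<in> level_set f"
  shows "grad f p = norm (grad f p) *\<^sub>R unit_normal f p" "p \<bullet> unit_normal f p > 0"
    "norm (grad f p) * (p \<bullet> unit_normal f p) = d"
proof -
  have Gnz: "grad f p \<noteq> 0" using grad_nz[OF p] .
  show Gu: "grad f p = norm (grad f p) *\<^sub>R unit_normal f p" using Gnz by (simp add: unit_normal_def)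
  have "grad f p \<bullet> p = d" using euler[of p] p N_sub N_nz by (auto simp: level_set_def)
  thus "norm (grad f p) * (p \<bullet> unit_normal f p) = d" using Gu by (metis inner_commute inner_scaleR_left)
  thus "p \<bullet> unit_normal f p > 0" using dpos Gnz by (metis zero_less_norm_iff zero_less_mult_pos)
qed

lemma approx_I0:
  assumes s: "\<sigma> = 1 \<or> \<sigma> = -1" and cv: "convex {q \<in> orthant. \<sigma> * f q \<le> \<sigma>}"
    and curv: "\<forall>p\<in>level_set f. \<forall>v\<in>tangent_dirs f p. normal_curvature f p v \<noteq> 0"
    and x: "x \<in> I0" and \<epsilon>: "\<epsilon> > 0"
  shows "\<exists>k a. (k, a) \<in> A \<and> \<sigma> * (x \<bullet> int_vec k / a) > \<sigma> * gg x - \<epsilon>"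
proof -
  have xO: "x \<in> orthant" "x \<noteq> 0" using x I0_sub I0_nz by auto
  define gx where "gx = gg x"
  have gx: "gx > 0" using gg_pos xO by (simp add: gx_def)
  define p0 where "p0 = nrm x"
  have p0N: "p0 \<in> level_set f" using nrm_N xO by (simp add: p0_def)
  have p0I: "p0 \<in> I0" using x gx by (auto simp: p0_def nrm_def I0_def gx_def)
  have xp0: "x = gx *\<^sub>R p0" using gx by (simp add: p0_def nrm_def gx_def)
  define u0 where "u0 = unit_normal f p0"
  have nu0: "norm u0 = 1" using unit_normal_norm[OF p0N] by (simp add: u0_def)
  define h0 where "h0 = p0 \<bullet> u0"
  have h0: "h0 > 0" using normal_facts(2)[OF p0N] by (simp add: h0_def u0_def)
  have supN: "\<sigma> * (q \<bullet> u0) \<le> \<sigma> * h0" if q: "q \<in> level_set f" for q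
  proof -
    have "\<sigma> * (grad f p0 \<bullet> (q - p0)) \<le> 0" using support[OF s cv p0N] q s by (auto simp: level_set_def)
    moreover have Gu: "norm (grad f p0) *\<^sub>R u0 = grad f p0" using normal_facts(1)[OF p0N] by (simp add: u0_def)
    moreover have "(norm (grad f p0) *\<^sub>R u0) \<bullet> (q - p0) = norm (grad f p0) * (q \<bullet> u0 - h0)"
      by (simp add: inner_diff_right h0_def inner_commute)
    ultimately have "\<sigma> * (norm (grad f p0) * (q \<bullet> u0 - h0)) \<le> 0" by simp
    hence "norm (grad f p0) * (\<sigma> * (q \<bullet> u0 - h0)) \<le> 0" by (simp add: algebra_simps)
    hence "\<sigma> * (q \<bullet> u0 - h0) \<le> 0" using grad_nz[OF p0N] by (simp add: mult_le_0_iff)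
    thus ?thesis by (simp add: algebra_simps)
  qed
  obtain R where R: "R > 0" "\<And>q. q \<in> level_set f \<Longrightarrow> norm q \<le> R" using N_bounded by blast
  obtain r0 where r0: "r0 > 0" "ball p0 r0 \<subseteq> I0" using open_I0 p0I open_contains_ball by blast
  define r where "r = min r0 (min (h0 / 4) (\<epsilon> * h0 / (2 * gx + 1)))"
  have g21: "2 * gx + 1 > 0" using gx by simp
  have r: "r > 0" "r \<le> r0" "r \<le> h0 / 4" "r \<le> \<epsilon> * h0 / (2 * gx + 1)"
    unfolding r_def using r0 h0 \<epsilon> g21
       apply simp
      apply (rule min.cobounded1)
     apply (rule min.coboundedI2, rule min.cobounded1)
    apply (rule min.coboundedI2, rule min.cobounded2)
    done
  have rI: "ball p0 r \<subseteq> I0" using subset_ball[OF r(2), of p0] r0(2) by blast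
  have ctu: "continuous_on UNIV (\<lambda>q::real^'n. \<sigma> * (q \<bullet> u0))" by (intro continuous_intros)
  obtain \<gamma> where \<gamma>: "\<gamma> > 0" "\<And>q. q \<in> level_set f \<Longrightarrow> q \<notin> ball p0 r \<Longrightarrow> \<sigma> * (q \<bullet> u0) \<le> \<sigma> * h0 - \<gamma>"
  proof (cases "level_set f - ball p0 r = {}")
    case True
    show ?thesis by (rule that[of 1]) (use True in auto)
  next
    case False
    have cpt: "compact (level_set f - ball p0 r)"
      using N_compact by (simp add: Diff_eq compact_Int_closed closed_Compl)
    obtain qm where qm: "qm \<in> level_set f - ball p0 r"
      and mx: "\<And>q. q \<in> level_set f - ball p0 r \<Longrightarrow> \<sigma> * (q \<bullet> u0) \<le> \<sigma> * (qm \<bullet> u0)"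
      using continuous_attains_sup[OF cpt False continuous_on_subset[OF ctu subset_UNIV]] by blast
    have qmN: "qm \<in> level_set f" and qmne: "qm \<noteq> p0" using qm r by auto
    have "\<sigma> * (qm \<bullet> u0) < \<sigma> * h0"
    proof (rule ccontr)
      assume "\<not> \<sigma> * (qm \<bullet> u0) < \<sigma> * h0"
      hence "\<sigma> * (qm \<bullet> u0) = \<sigma> * h0" using supN[OF qmN] by simp
      hence "qm \<bullet> u0 = h0" using s by auto
      hence "qm = p0" using unique_opt[OF s cv curv p0N p0I qmN] by (simp add: h0_def u0_def)
      thus False using qmne by simp
    qed
    thus ?thesis using mx by (intro that[of "\<sigma> * h0 - \<sigma> * (qm \<bullet> u0)"]) auto
  qed
  define \<delta> where "\<delta> = min (\<gamma> / (2 * R + 1)) (h0 / (4 * R + 1))"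
  have \<delta>: "\<delta> > 0" "R * \<delta> * 2 < \<gamma>" "R * \<delta> \<le> h0 / 4"
  proof -
    show "\<delta> > 0" using \<gamma> R h0 by (simp add: \<delta>_def)
    have pR: "2 * R + 1 > 0" "4 * R + 1 > 0" using R by auto
    have "\<delta> \<le> \<gamma> / (2 * R + 1)" unfolding \<delta>_def by (rule min.cobounded1)
    hence "\<delta> * (2 * R + 1) \<le> \<gamma>" using pR by (simp add: pos_le_divide_eq)
    moreover have "R * \<delta> * 2 = \<delta> * (2 * R + 1) - \<delta>" by (simp add: algebra_simps)
    ultimately show "R * \<delta> * 2 < \<gamma>" using \<open>\<delta> > 0\<close> by linarith
    have "\<delta> \<le> h0 / (4 * R + 1)" unfolding \<delta>_def by (rule min.cobounded2)
    hence "\<delta> * (4 * R + 1) \<le> h0" using pR by (simp add: pos_le_divide_eq)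
    moreover have "R * \<delta> * 4 = \<delta> * (4 * R + 1) - \<delta>" by (simp add: algebra_simps)
    ultimately show "R * \<delta> \<le> h0 / 4" using \<open>\<delta> > 0\<close> by linarith
  qed
  obtain k where knz: "int_vec k \<noteq> 0" and kw: "norm ((1 / norm (int_vec k)) *\<^sub>R int_vec k - u0) < \<delta>"
    using int_dir[OF nu0 \<delta>(1)] by blast
  define w where "w = (1 / norm (int_vec k)) *\<^sub>R int_vec k"
  have nw: "norm w = 1" using knz by (simp add: w_def)
  have wu: "norm (w - u0) < \<delta>" using kw by (simp add: w_def)
  have pert: "\<bar>q \<bullet> w - q \<bullet> u0\<bar> \<le> R * \<delta>" if q: "q \<in> level_set f" for q
  proof -
    have "\<bar>q \<bullet> w - q \<bullet> u0\<bar> = \<bar>q \<bullet> (w - u0)\<bar>" by (simp add: inner_diff_right)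
    also have "\<dots> \<le> norm q * norm (w - u0)" by (rule Cauchy_Schwarz_ineq2)
    also have "\<dots> \<le> R * \<delta>" using R(2)[OF q] wu R(1) by (intro mult_mono) auto
    finally show ?thesis .
  qed
  have ctw: "continuous_on UNIV (\<lambda>q::real^'n. \<sigma> * (q \<bullet> w))" by (intro continuous_intros)
  obtain p where pN: "p \<in> level_set f" and popt: "\<And>q. q \<in> level_set f \<Longrightarrow> \<sigma> * (q \<bullet> w) \<le> \<sigma> * (p \<bullet> w)"
    using continuous_attains_sup[OF N_compact N_ne continuous_on_subset[OF ctw subset_UNIV]] by blast
  have pball: "p \<in> ball p0 r"
  proof (rule ccontr)
    assume nb: "p \<notin> ball p0 r"
    have "\<sigma> * (p \<bullet> w) \<le> \<sigma> * (p \<bullet> u0) + R * \<delta>" using pert[OF pN] s by (auto simp: abs_le_iff)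
    also have "\<dots> \<le> \<sigma> * h0 - \<gamma> + R * \<delta>" using \<gamma>(2)[OF pN nb] by simp
    also have "\<dots> < \<sigma> * h0 - R * \<delta>" using \<delta> by simp
    also have "\<dots> \<le> \<sigma> * (p0 \<bullet> w)" using pert[OF p0N] s by (auto simp: abs_le_iff h0_def)
    finally show False using popt[OF p0N] by simp
  qed
  have pI: "p \<in> I0" using pball rI by auto
  have dpp: "norm (p - p0) < r" using pball by (simp add: dist_norm norm_minus_commute)
  have PQ: "\<bar>p0 \<bullet> w - p \<bullet> w\<bar> < r"
  proof -
    have "\<bar>p0 \<bullet> w - p \<bullet> w\<bar> = \<bar>(p0 - p) \<bullet> w\<bar>" by (simp add: inner_diff_left)
    also have "\<dots> \<le> norm (p0 - p) * norm w" by (rule Cauchy_Schwarz_ineq2)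
    also have "\<dots> < r" using dpp nw by (simp add: norm_minus_commute)
    finally show ?thesis .
  qed
  have Pbig: "p \<bullet> w > h0 / 2"
  proof -
    have "\<bar>p0 \<bullet> w - h0\<bar> \<le> R * \<delta>" using pert[OF p0N] by (simp add: h0_def)
    thus ?thesis using PQ \<delta>(3) r(3) by (auto simp: abs_le_iff abs_less_iff)
  qed
  have wl: "w = ((p \<bullet> w) / d) *\<^sub>R grad f p" by (rule lagrange[OF s pN pI popt])
  have Pp: "p \<bullet> w > 0" using Pbig h0 by simp
  define P where "P = p \<bullet> w"
  have wl': "w = (P / d) *\<^sub>R grad f p" using wl by (simp add: P_def)
  have P0: "P > 0" using Pp by (simp add: P_def)
  have "(d / P) *\<^sub>R w = grad f p" using P0 dpos by (simp add: wl')
  hence gw: "grad f p = (d / (p \<bullet> w)) *\<^sub>R w" by (simp add: P_def)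
  have un: "unit_normal f p = w" using gw Pp dpos nw by (simp add: unit_normal_def)
  have nk: "norm (int_vec k) > 0" using knz by simp
  define a where "a = p \<bullet> int_vec k"
  have k0: "k \<noteq> 0" using knz by (auto simp: int_vec_def vec_eq_iff)
  have "\<exists>c>0. unit_normal f p = c *\<^sub>R int_vec k"
    using un nk by (intro exI[of _ "1 / norm (int_vec k)"]) (simp add: w_def)
  hence "k \<noteq> 0 \<and> p \<in> level_set f \<and> (\<exists>c>0. unit_normal f p = c *\<^sub>R int_vec k)" using k0 pN by blast
  hence kA: "(k, a) \<in> A" unfolding marked_action_spectrum_def a_def by blast
  have ratio: "x \<bullet> int_vec k / a = gx * (p0 \<bullet> w) / (p \<bullet> w)"
    using nk by (simp add: a_def w_def xp0 field_simps)
  have e1: "gx * (p0 \<bullet> w) / (p \<bullet> w) - gx = gx * (p0 \<bullet> w - p \<bullet> w) / (p \<bullet> w)"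
    using Pp by (simp add: field_simps)
  have "\<bar>gx * (p0 \<bullet> w) / (p \<bullet> w) - gx\<bar> = gx * \<bar>p0 \<bullet> w - p \<bullet> w\<bar> / (p \<bullet> w)"
    unfolding e1 using Pp gx by (simp add: abs_mult abs_divide)
  also have "\<dots> \<le> gx * r / (h0 / 2)"
    using PQ Pbig gx h0 Pp by (intro frac_le mult_left_mono) auto
  also have "\<dots> = 2 * gx * r / h0" using h0 by (simp add: field_simps)
  also have "\<dots> < \<epsilon>"
  proof -
    have "2 * gx * r \<le> 2 * gx * (\<epsilon> * h0 / (2 * gx + 1))" using r(4) gx by (intro mult_left_mono) auto
    also have "\<dots> < \<epsilon> * h0" using gx \<epsilon> h0 by (simp add: field_simps)
    finally show ?thesis using h0 by (simp add: divide_less_eq mult.commute)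
  qed
  finally have "\<bar>x \<bullet> int_vec k / a - gx\<bar> < \<epsilon>" using ratio by simp
  hence "\<sigma> * (x \<bullet> int_vec k / a) > \<sigma> * gg x - \<epsilon>" using s by (auto simp: gx_def abs_less_iff)
  thus ?thesis using kA by blast
qed


lemma approx_all:
  assumes s: "\<sigma> = 1 \<or> \<sigma> = -1" and cv: "convex {q \<in> orthant. \<sigma> * f q \<le> \<sigma>}"
    and curv: "\<forall>p\<in>level_set f. \<forall>v\<in>tangent_dirs f p. normal_curvature f p v \<noteq> 0"
    and x: "x \<in> orthant" and \<epsilon>: "\<epsilon> > 0"
  shows "\<exists>k a. (k, a) \<in> A \<and> \<sigma> * (x \<bullet> int_vec k / a) > \<sigma> * gg x - \<epsilon>"
proof -
  have e4: "\<epsilon> / 4 > 0" using \<epsilon> by simp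
  obtain \<eta>0 where \<eta>0: "\<eta>0 > 0" and gc: "\<And>y. y \<in> orthant \<Longrightarrow> dist y x < \<eta>0 \<Longrightarrow> dist (gg y) (gg x) < \<epsilon> / 4"
    using gg_cont x e4 unfolding continuous_on_iff by blast
  define c1 where "c1 = gg (1::real^'n)"
  have c1: "c1 \<ge> 0" by (simp add: c1_def gg_nonneg)
  define \<eta> where "\<eta> = min (\<eta>0 / (norm (1::real^'n) + 1)) (\<epsilon> / (4 * (c1 + 1)))"
  have n1: "norm (1::real^'n) + 1 > 0" by (simp add: add_nonneg_pos)
  have \<eta>: "\<eta> > 0" using \<eta>0 n1 \<epsilon> c1 by (simp add: \<eta>_def)
  have \<eta>1: "\<eta> \<le> \<eta>0 / (norm (1::real^'n) + 1)" unfolding \<eta>_def by (rule min.cobounded1)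
  have \<eta>2: "\<eta> \<le> \<epsilon> / (4 * (c1 + 1))" unfolding \<eta>_def by (rule min.cobounded2)
  define x' where "x' = \<eta> *\<^sub>R 1 + x"
  have x'I: "x' \<in> I0" unfolding x'_def using \<eta> x by (intro I0_add) (auto simp: I0_def)
  have x'O: "x' \<in> orthant" using x'I I0_sub by auto
  have "dist x' x = \<eta> * norm (1::real^'n)" using \<eta> by (simp add: x'_def dist_norm)
  also have "\<dots> < \<eta>0"
  proof -
    have "\<eta> * norm (1::real^'n) < \<eta> * (norm (1::real^'n) + 1)" using \<eta> by simp
    also have "\<dots> \<le> \<eta>0" using \<eta>1 n1 by (simp add: pos_le_divide_eq)
    finally show ?thesis .
  qed
  finally have "\<bar>gg x' - gg x\<bar> < \<epsilon> / 4" using gc[OF x'O] by (simp add: dist_real_def)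
  hence "gg x - \<epsilon> / 4 < gg x'" "gg x' < gg x + \<epsilon> / 4" unfolding abs_less_iff by linarith+
  hence gx': "\<sigma> * gg x' \<ge> \<sigma> * gg x - \<epsilon> / 4" using s by auto
  have "\<epsilon> / 2 > 0" using \<epsilon> by simp
  from approx_I0[OF s cv curv x'I this] obtain k a where ka: "(k, a) \<in> A"
    and big: "\<sigma> * (x' \<bullet> int_vec k / a) > \<sigma> * gg x' - \<epsilon> / 2" by blast
  have one: "(1::real^'n) \<in> orthant" using one_I0 I0_sub by auto
  have t0: "0 \<le> 1 \<bullet> int_vec k / a" using A_nonneg[OF ka one] .
  have t1: "\<sigma> * (\<eta> * (1 \<bullet> int_vec k / a)) \<le> \<eta> * c1"
  proof (cases "\<sigma> = 1")
    case True
    have "\<sigma> * (1 \<bullet> int_vec k / a) \<le> \<sigma> * gg 1" using A_bound[OF s cv ka one] .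
    hence "1 \<bullet> int_vec k / a \<le> c1" using True by (simp add: c1_def)
    hence "\<eta> * (1 \<bullet> int_vec k / a) \<le> \<eta> * c1" using \<eta> by (intro mult_left_mono) auto
    thus ?thesis using True by simp
  next
    case False
    hence "\<sigma> = -1" using s by simp
    have "0 \<le> \<eta> * (1 \<bullet> int_vec k / a)" using t0 \<eta> by (intro mult_nonneg_nonneg) auto
    moreover have "0 \<le> \<eta> * c1" using \<eta> c1 by simp
    ultimately show ?thesis unfolding \<open>\<sigma> = -1\<close> by linarith
  qed
  have "\<eta> * c1 < \<epsilon> / 4"
  proof -
    have "\<eta> * c1 \<le> \<epsilon> / (4 * (c1 + 1)) * c1" using \<eta>2 c1 by (rule mult_right_mono)
    also have "\<dots> < \<epsilon> / 4" using c1 \<epsilon> by (simp add: field_simps)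
    finally show ?thesis .
  qed
  moreover have "x \<bullet> int_vec k / a = x' \<bullet> int_vec k / a - \<eta> * (1 \<bullet> int_vec k / a)"
    by (simp add: x'_def inner_add_left add_divide_distrib)
  ultimately have "\<sigma> * (x \<bullet> int_vec k / a) > \<sigma> * gg x - \<epsilon>"
    using big gx' t1 by (simp add: right_diff_distrib)
  thus ?thesis using ka by blast
qed

lemma sup_formula:
  assumes cv: "convex {q \<in> orthant. f q \<le> 1}"
    and curv: "\<forall>p\<in>level_set f. \<forall>v\<in>tangent_dirs f p. normal_curvature f p v \<noteq> 0"
    and x: "x \<in> orthant" and h: "hbar > 0"
  shows "(SUP ka\<in>A. hbar * (x \<bullet> int_vec (fst ka)) / snd ka) = hbar * gg x"
proof -
  have cv': "convex {q \<in> orthant. 1 * f q \<le> 1}" using cv by simp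
  have s: "(1::real) = 1 \<or> (1::real) = -1" by simp
  have ub: "hbar * (x \<bullet> int_vec (fst ka)) / snd ka \<le> hbar * gg x" if "ka \<in> A" for ka
  proof -
    obtain k a where ka: "ka = (k, a)" by force
    have "x \<bullet> int_vec k / a \<le> gg x" using A_bound[OF s cv' _ x, of k a] that ka by simp
    hence "hbar * (x \<bullet> int_vec k / a) \<le> hbar * gg x" using h by (intro mult_left_mono) auto
    thus ?thesis using ka by simp
  qed
  obtain k0 a0 where "(k0, a0) \<in> A" using approx_all[OF s cv' curv x zero_less_one] by blast
  hence ne: "A \<noteq> {}" by blast
  have bdd: "bdd_above ((\<lambda>ka. hbar * (x \<bullet> int_vec (fst ka)) / snd ka) ` A)"
    using ub by (intro bdd_aboveI2) 
  show ?thesis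
  proof (rule antisym)
    show "(SUP ka\<in>A. hbar * (x \<bullet> int_vec (fst ka)) / snd ka) \<le> hbar * gg x"
      using ne ub by (intro cSUP_least) auto
    show "hbar * gg x \<le> (SUP ka\<in>A. hbar * (x \<bullet> int_vec (fst ka)) / snd ka)"
    proof (rule field_le_epsilon)
      fix e :: real assume e: "e > 0"
      obtain k a where ka: "(k, a) \<in> A" and big: "1 * (x \<bullet> int_vec k / a) > 1 * gg x - e / hbar"
        using approx_all[OF s cv' curv x divide_pos_pos[OF e h]] by blast
      have "hbar * gg x - e < hbar * (x \<bullet> int_vec k / a)"
        using big h by (simp add: field_simps)
      also have "\<dots> = hbar * (x \<bullet> int_vec (fst (k, a))) / snd (k, a)" by simp
      also have "\<dots> \<le> (SUP ka\<in>A. hbar * (x \<bullet> int_vec (fst ka)) / snd ka)"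
        by (rule cSUP_upper[OF ka bdd])
      finally show "hbar * gg x \<le> (SUP ka\<in>A. hbar * (x \<bullet> int_vec (fst ka)) / snd ka) + e" by simp
    qed
  qed
qed

lemma inf_formula:
  assumes cv: "convex {q \<in> orthant. f q \<ge> 1}"
    and curv: "\<forall>p\<in>level_set f. \<forall>v\<in>tangent_dirs f p. normal_curvature f p v \<noteq> 0"
    and x: "x \<in> orthant" and h: "hbar > 0"
  shows "(INF ka\<in>A. hbar * (x \<bullet> int_vec (fst ka)) / snd ka) = hbar * gg x"
proof -
  have cv': "convex {q \<in> orthant. -1 * f q \<le> -1}" using cv by simp
  have s: "(-1::real) = 1 \<or> (-1::real) = -1" by simp
  have lb: "hbar * gg x \<le> hbar * (x \<bullet> int_vec (fst ka)) / snd ka" if "ka \<in> A" for ka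
  proof -
    obtain k a where ka: "ka = (k, a)" by force
    have "gg x \<le> x \<bullet> int_vec k / a" using A_bound[OF s cv' _ x, of k a] that ka by simp
    hence "hbar * gg x \<le> hbar * (x \<bullet> int_vec k / a)" using h by (intro mult_left_mono) auto
    thus ?thesis using ka by simp
  qed
  obtain k0 a0 where "(k0, a0) \<in> A" using approx_all[OF s cv' curv x zero_less_one] by blast
  hence ne: "A \<noteq> {}" by blast
  have bdd: "bdd_below ((\<lambda>ka. hbar * (x \<bullet> int_vec (fst ka)) / snd ka) ` A)"
    using lb by (intro bdd_belowI2)
  show ?thesis
  proof (rule antisym)
    show "hbar * gg x \<le> (INF ka\<in>A. hbar * (x \<bullet> int_vec (fst ka)) / snd ka)"
      using ne lb by (intro cINF_greatest) auto
    show "(INF ka\<in>A. hbar * (x \<bullet> int_vec (fst ka)) / snd ka) \<le> hbar * gg x"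
    proof (rule field_le_epsilon)
      fix e :: real assume e: "e > 0"
      obtain k a where ka: "(k, a) \<in> A" and big: "-1 * (x \<bullet> int_vec k / a) > -1 * gg x - e / hbar"
        using approx_all[OF s cv' curv x divide_pos_pos[OF e h]] by blast
      have "(INF ka\<in>A. hbar * (x \<bullet> int_vec (fst ka)) / snd ka) \<le> hbar * (x \<bullet> int_vec (fst (k, a))) / snd (k, a)"
        by (rule cINF_lower[OF bdd ka])
      also have "\<dots> = hbar * (x \<bullet> int_vec k / a)" by simp
      also have "\<dots> < hbar * gg x + e"
        using big h by (simp add: field_simps)
      finally show "(INF ka\<in>A. hbar * (x \<bullet> int_vec (fst ka)) / snd ka) \<le> hbar * gg x + e" by simp
    qed
  qed
qed

lemma nat_vec_orth: "nat_vec m \<in> orthant" by (simp add: nat_vec_def orthant_def)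

lemma f_scale_gg: "hbar > 0 \<Longrightarrow> f (hbar *\<^sub>R nat_vec m) = (hbar * gg (nat_vec m)) powr d"
proof -
  assume h: "hbar > 0"
  have "hbar *\<^sub>R nat_vec m \<in> orthant" using h by (intro orthant_scale nat_vec_orth) simp
  hence "f (hbar *\<^sub>R nat_vec m) = gg (hbar *\<^sub>R nat_vec m) powr d" by (simp add: gg_powr)
  also have "gg (hbar *\<^sub>R nat_vec m) = hbar * gg (nat_vec m)" using gg_hom[OF nat_vec_orth h] .
  finally show ?thesis .
qed

end

theorem theorem1p2:
  fixes f :: "real ^ 'n \<Rightarrow> real" and d hbar :: real
  assumes "0 < d" and "0 < hbar" and "toric_profile f d"
  shows "(strictly_convex_level f \<longrightarrow>
            (\<forall>m. f (hbar *\<^sub>R nat_vec m) =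
                 (SUP ka\<in>marked_action_spectrum f. hbar * (nat_vec m \<bullet> int_vec (fst ka)) / snd ka) powr d) \<and>
            sigma_EBK f hbar = {(SUP ka\<in>marked_action_spectrum f. hbar * (nat_vec m \<bullet> int_vec (fst ka)) / snd ka) powr d | m. True})
       \<and> (strictly_concave_level f \<longrightarrow>
            (\<forall>m. f (hbar *\<^sub>R nat_vec m) =
                 (INF ka\<in>marked_action_spectrum f. hbar * (nat_vec m \<bullet> int_vec (fst ka)) / snd ka) powr d) \<and>
            sigma_EBK f hbar = {(INF ka\<in>marked_action_spectrum f. hbar * (nat_vec m \<bullet> int_vec (fst ka)) / snd ka) powr d | m. True})"
proof -
  interpret toric f d using assms by (unfold_locales) auto
  have h: "hbar > 0" using assms by simp
  show ?thesis
  proof (intro conjI impI)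
    assume sc: "strictly_convex_level f"
    have cv: "convex {q \<in> orthant. f q \<le> 1}" using sc by (simp add: strictly_convex_level_def)
    have curv: "\<forall>p\<in>level_set f. \<forall>v\<in>tangent_dirs f p. normal_curvature f p v \<noteq> 0"
      using sc unfolding strictly_convex_level_def by force
    show all: "\<forall>m. f (hbar *\<^sub>R nat_vec m) =
                 (SUP ka\<in>marked_action_spectrum f. hbar * (nat_vec m \<bullet> int_vec (fst ka)) / snd ka) powr d"
      using sup_formula[OF cv curv nat_vec_orth h] f_scale_gg[OF h] by simp
    show "sigma_EBK f hbar = {(SUP ka\<in>marked_action_spectrum f. hbar * (nat_vec m \<bullet> int_vec (fst ka)) / snd ka) powr d | m. True}"
      unfolding sigma_EBK_def using all by simp
  next
    assume sc: "strictly_concave_level f"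
    have cv: "convex {q \<in> orthant. f q \<ge> 1}" using sc by (simp add: strictly_concave_level_def)
    have curv: "\<forall>p\<in>level_set f. \<forall>v\<in>tangent_dirs f p. normal_curvature f p v \<noteq> 0"
      using sc unfolding strictly_concave_level_def by force
    show all: "\<forall>m. f (hbar *\<^sub>R nat_vec m) =
                 (INF ka\<in>marked_action_spectrum f. hbar * (nat_vec m \<bullet> int_vec (fst ka)) / snd ka) powr d"
      using inf_formula[OF cv curv nat_vec_orth h] f_scale_gg[OF h] by simp
    show "sigma_EBK f hbar = {(INF ka\<in>marked_action_spectrum f. hbar * (nat_vec m \<bullet> int_vec (fst ka)) / snd ka) powr d | m. True}"
      unfolding sigma_EBK_def using all by simp
  qed
qed


end
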